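(* Let $X$ be a Hausdorff locally compact space and $\sigma\colon\mathrm{Dom}(\sigma)\to\mathrm{Ran}(\sigma)$ a local homeomorphism between open subsets of $X$, with Deaconu–Renault groupoid $\mathcal{G}_\sigma$. Then $A(\sigma)$ and $P_0(\sigma)$ are $\mathcal{G}_\sigma$-invariant subsets of $X$, and $A(\sigma)\cup P_0(\sigma)$ equals the set of points $x\in X$ such that $\mathrm{Iso}((\mathcal{G}_\sigma)_{\overline{[x]}})^\circ_x=(\mathcal{G}_\sigma)^x_x$.
   Context: $\sigma^0=\mathrm{id}_X$ and $\sigma^n$ is the $n$-fold composition with natural domain $\mathrm{Dom}(\sigma^n)$. $\mathcal{G}_\sigma=\{(x,m-n,y): m,n\ge0,\ x\in\mathrm{Dom}(\sigma^m),\ y\in\mathrm{Dom}(\sigma^n),\ \sigma^m(x)=\sigma^n(y)\}$ with $r(x,p,y)=x$, $s(x,p,y)=y$, $(x,p,y)(y,q,w)=(x,p+q,w)$, unit space $X$, topology with basis $Z(U,m,n,V)=\{(x,m-n,y): x\in U\cap\mathrm{Dom}(\sigma^m),\ y\in V\cap\mathrm{Dom}(\sigma^n),\ \sigma^m(x)=\sigma^n(y)\}$. The orbit $[x]$ is $\{y:\sigma^m(y)=\sigma^n(x)\text{ for some }m,n\ge0\}$. $A(\sigma)$ is the set of aperiodic points (no $l\ge0,p\ge1$ with $\sigma^{l+p}(x)=\sigma^l(x)$); $P_0(\sigma)$ is the set of periodic points $x$ that are isolated points of $[x]$ (relative topology). For closed invariant $Y\subset X$, $(\mathcal{G}_\sigma)_Y=s^{-1}(Y)$,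 and $\mathrm{Iso}((\mathcal{G}_\sigma)_{\overline{[x]}})^\circ_x$ is the intersection with $(\mathcal{G}_\sigma)^x_x$ of the interior in $(\mathcal{G}_\sigma)_{\overline{[x]}}$ of its isotropy bundle $\{g: s(g)=r(g)\}$. *)

theory Defs
  imports "HOL-Analysis.Analysis"
begin

text \<open>A partially defined map sigma : Dom(sigma) -> Ran(sigma), Dom, Ran open in X,
  represented by a total function together with its domain D; Ran = sigma ` D.\<close>

definition local_homeo_on :: "'a topology \<Rightarrow> 'a set \<Rightarrow> ('a \<Rightarrow> 'a) \<Rightarrow> bool" where
  "local_homeo_on X D \<sigma> \<longleftrightarrow>
     openin X D \<and> openin X (\<sigma> ` D) \<and>
     (\<forall>x\<in>D. \<exists>U. openin X U \<and> x \<in> U \<and> U \<subseteq> D \<and> openin X (\<sigma> ` U) \<and>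
        homeomorphic_map (subtopology X U) (subtopology X (\<sigma> ` U)) \<sigma>)"

text \<open>Natural domain of the n-fold composition sigma^n (sigma^0 = id_X).\<close>
definition dom_pow :: "'a topology \<Rightarrow> 'a set \<Rightarrow> ('a \<Rightarrow> 'a) \<Rightarrow> nat \<Rightarrow> 'a set" where
  "dom_pow X D \<sigma> n = {x \<in> topspace X. \<forall>k<n. (\<sigma> ^^ k) x \<in> D}"

definition DR_groupoid :: "'a topology \<Rightarrow> 'a set \<Rightarrow> ('a \<Rightarrow> 'a) \<Rightarrow> ('a \<times> int \<times> 'a) set" where
  "DR_groupoid X D \<sigma> = {(x, int m - int n, y) | x y m n.
      x \<in> dom_pow X D \<sigma> m \<and> y \<in> dom_pow X D \<sigma> n \<and> (\<sigma> ^^ m) x = (\<sigma> ^^ n) y}"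

definition DR_r :: "'a \<times> int \<times> 'a \<Rightarrow> 'a" where "DR_r g = fst g"
definition DR_s :: "'a \<times> int \<times> 'a \<Rightarrow> 'a" where "DR_s g = snd (snd g)"

definition DR_Z :: "'a topology \<Rightarrow> 'a set \<Rightarrow> ('a \<Rightarrow> 'a) \<Rightarrow> 'a set \<Rightarrow> nat \<Rightarrow> nat \<Rightarrow> 'a set
    \<Rightarrow> ('a \<times> int \<times> 'a) set" where
  "DR_Z X D \<sigma> U m n V = {(x, int m - int n, y) | x y.
      x \<in> U \<inter> dom_pow X D \<sigma> m \<and> y \<in> V \<inter> dom_pow X D \<sigma> n \<and> (\<sigma> ^^ m) x = (\<sigma> ^^ n) y}"

definition DR_open :: "'a topology \<Rightarrow> 'a set \<Rightarrow> ('a \<Rightarrow> 'a) \<Rightarrow> ('a \<times> int \<times> 'a) set \<Rightarrow> bool" where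
  "DR_open X D \<sigma> W \<longleftrightarrow> W \<subseteq> DR_groupoid X D \<sigma> \<and>
     (\<forall>g\<in>W. \<exists>U m n V. openin X U \<and> openin X V \<and>
        g \<in> DR_Z X D \<sigma> U m n V \<and> DR_Z X D \<sigma> U m n V \<subseteq> W)"

definition DR_orbit :: "'a topology \<Rightarrow> 'a set \<Rightarrow> ('a \<Rightarrow> 'a) \<Rightarrow> 'a \<Rightarrow> 'a set" where
  "DR_orbit X D \<sigma> x = {y. \<exists>m n. y \<in> dom_pow X D \<sigma> m \<and> x \<in> dom_pow X D \<sigma> n \<and>
      (\<sigma> ^^ m) y = (\<sigma> ^^ n) x}"

definition periodic_pt :: "'a topology \<Rightarrow> 'a set \<Rightarrow> ('a \<Rightarrow> 'a) \<Rightarrow> 'a \<Rightarrow> bool" where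
  "periodic_pt X D \<sigma> x \<longleftrightarrow> (\<exists>l p. p \<ge> 1 \<and> x \<in> dom_pow X D \<sigma> (l + p) \<and>
      (\<sigma> ^^ (l + p)) x = (\<sigma> ^^ l) x)"

definition aperiodic_set :: "'a topology \<Rightarrow> 'a set \<Rightarrow> ('a \<Rightarrow> 'a) \<Rightarrow> 'a set" where
  "aperiodic_set X D \<sigma> = {x \<in> topspace X. \<not> periodic_pt X D \<sigma> x}"

definition P0_set :: "'a topology \<Rightarrow> 'a set \<Rightarrow> ('a \<Rightarrow> 'a) \<Rightarrow> 'a set" where
  "P0_set X D \<sigma> = {x \<in> topspace X. periodic_pt X D \<sigma> x \<and>
      openin (subtopology X (DR_orbit X D \<sigma> x)) {x}}"

definition DR_invariant :: "'a topology \<Rightarrow> 'a set \<Rightarrow> ('a \<Rightarrow> 'a) \<Rightarrow> 'a set \<Rightarrow> bool" where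
  "DR_invariant X D \<sigma> A \<longleftrightarrow> A \<subseteq> topspace X \<and>
     (\<forall>g\<in>DR_groupoid X D \<sigma>. DR_r g \<in> A \<longleftrightarrow> DR_s g \<in> A)"

definition DR_reduction :: "'a topology \<Rightarrow> 'a set \<Rightarrow> ('a \<Rightarrow> 'a) \<Rightarrow> 'a set \<Rightarrow> ('a \<times> int \<times> 'a) set" where
  "DR_reduction X D \<sigma> Y = {g \<in> DR_groupoid X D \<sigma>. DR_s g \<in> Y}"

definition iso_bundle :: "('a \<times> int \<times> 'a) set \<Rightarrow> ('a \<times> int \<times> 'a) set" where
  "iso_bundle H = {g \<in> H. DR_s g = DR_r g}"

definition DR_isotropy_at :: "'a topology \<Rightarrow> 'a set \<Rightarrow> ('a \<Rightarrow> 'a) \<Rightarrow> 'a \<Rightarrow> ('a \<times> int \<times> 'a) set" where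
  "DR_isotropy_at X D \<sigma> x = {g \<in> DR_groupoid X D \<sigma>. DR_r g = x \<and> DR_s g = x}"

text \<open>Iso((G_sigma)_{closure [x]})^interior_x: the interior of the isotropy bundle in the
  subspace H = (G_sigma)_Y (relatively open sets are W \<inter> H with W open), intersected with (G_sigma)^x_x.\<close>
definition DR_iso_interior_at :: "'a topology \<Rightarrow> 'a set \<Rightarrow> ('a \<Rightarrow> 'a) \<Rightarrow> 'a \<Rightarrow> ('a \<times> int \<times> 'a) set" where
  "DR_iso_interior_at X D \<sigma> x =
     (let Y = X closure_of (DR_orbit X D \<sigma> x);
          H = DR_reduction X D \<sigma> Y
      in {g \<in> H. \<exists>W. DR_open X D \<sigma> W \<and> g \<in> W \<and> W \<inter> H \<subseteq> iso_bundle H})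
     \<inter> DR_isotropy_at X D \<sigma> x"

end

theory Submission
  imports Defs
begin

definition lh :: "'a topology \<Rightarrow> ('a \<Rightarrow> 'a) \<Rightarrow> 'a set \<Rightarrow> bool" where
  "lh X f A \<longleftrightarrow> A \<subseteq> topspace X \<and>
    (\<forall>x\<in>A. \<forall>U. openin X U \<and> x \<in> U \<longrightarrow> (\<exists>N. openin X N \<and> x \<in> N \<and> N \<subseteq> U \<inter> A \<and>
        inj_on f N \<and> (\<forall>W. openin X W \<and> W \<subseteq> N \<longrightarrow> openin X (f ` W)))) \<and>
    (\<forall>x\<in>A. \<forall>V. openin X V \<and> f x \<in> V \<longrightarrow> (\<exists>N. openin X N \<and> x \<in> N \<and> N \<subseteq> A \<and> f ` N \<subseteq> V))"

lemma lhD1: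
  assumes "lh X f A" "x \<in> A" "openin X U" "x \<in> U"
  obtains N where "openin X N" "x \<in> N" "N \<subseteq> U \<inter> A" "inj_on f N"
     "\<And>W. openin X W \<Longrightarrow> W \<subseteq> N \<Longrightarrow> openin X (f ` W)"
  using assms unfolding lh_def by meson

lemma lhD2:
  assumes "lh X f A" "x \<in> A" "openin X V" "f x \<in> V"
  obtains N where "openin X N" "x \<in> N" "N \<subseteq> A" "f ` N \<subseteq> V"
  using assms unfolding lh_def by meson

lemma lh_id: "lh X id (topspace X)"
  unfolding lh_def
  apply (intro conjI ballI allI impI)
    apply simp
  by (auto dest: openin_subset intro!: exI)

lemma lh_comp:
  assumes f: "lh X f A" and g: "lh X g B"
  shows "lh X (g \<circ> f) {x \<in> A. f x \<in> B}"
  unfolding lh_def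
proof (intro conjI ballI allI impI)
  show "{x \<in> A. f x \<in> B} \<subseteq> topspace X" using f unfolding lh_def by auto
next
  fix x U assume x: "x \<in> {x \<in> A. f x \<in> B}" and U: "openin X U \<and> x \<in> U"
  have fxt: "f x \<in> topspace X" using g x unfolding lh_def by auto
  obtain N1 where N1: "openin X N1" "f x \<in> N1" "N1 \<subseteq> topspace X \<inter> B" "inj_on g N1"
     "\<And>W. openin X W \<Longrightarrow> W \<subseteq> N1 \<Longrightarrow> openin X (g ` W)"
    using lhD1[OF g _ openin_topspace fxt] x by blast
  obtain N2 where N2: "openin X N2" "x \<in> N2" "N2 \<subseteq> A" "f ` N2 \<subseteq> N1"
    using lhD2[OF f _ N1(1) N1(2)] x by blast
  obtain N3 where N3: "openin X N3" "x \<in> N3" "N3 \<subseteq> (U \<inter> N2) \<inter> A" "inj_on f N3"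
     "\<And>W. openin X W \<Longrightarrow> W \<subseteq> N3 \<Longrightarrow> openin X (f ` W)"
    using lhD1[OF f _ openin_Int[OF conjunct1[OF U] N2(1)]] x U N2 by blast
  show "\<exists>N. openin X N \<and> x \<in> N \<and> N \<subseteq> U \<inter> {x \<in> A. f x \<in> B} \<and>
        inj_on (g \<circ> f) N \<and> (\<forall>W. openin X W \<and> W \<subseteq> N \<longrightarrow> openin X ((g \<circ> f) ` W))"
  proof (intro exI conjI allI impI)
    show "openin X N3" "x \<in> N3" by fact+
    show "N3 \<subseteq> U \<inter> {x \<in> A. f x \<in> B}" using N3(3) N2(4) N1(3) by blast
    show "inj_on (g \<circ> f) N3"
      by (rule comp_inj_on[OF N3(4) inj_on_subset[OF N1(4)]]) (use N3(3) N2(4) in blast)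
    fix W assume W: "openin X W \<and> W \<subseteq> N3"
    have "openin X (f ` W)" using N3(5) W by blast
    moreover have "f ` W \<subseteq> N1" using W N3(3) N2(4) by blast
    ultimately show "openin X ((g \<circ> f) ` W)" using N1(5) by (metis image_comp)
  qed
next
  fix x V assume x: "x \<in> {x \<in> A. f x \<in> B}" and V: "openin X V \<and> (g \<circ> f) x \<in> V"
  obtain N1 where N1: "openin X N1" "f x \<in> N1" "N1 \<subseteq> B" "g ` N1 \<subseteq> V"
    using lhD2[OF g _ conjunct1[OF V]] x V by auto
  obtain N2 where N2: "openin X N2" "x \<in> N2" "N2 \<subseteq> A" "f ` N2 \<subseteq> N1"
    using lhD2[OF f _ N1(1) N1(2)] x by blast
  show "\<exists>N. openin X N \<and> x \<in> N \<and> N \<subseteq> {x \<in> A. f x \<in> B} \<and> (g \<circ> f) ` N \<subseteq> V"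
    using N1 N2 by (intro exI[of _ N2]) (auto, blast)
qed

lemma lh_sigma:
  assumes "local_homeo_on X D \<sigma>"
  shows "lh X \<sigma> D"
proof -
  have D: "openin X D" and loc: "\<And>x. x \<in> D \<Longrightarrow> \<exists>U. openin X U \<and> x \<in> U \<and> U \<subseteq> D \<and> openin X (\<sigma> ` U) \<and>
        homeomorphic_map (subtopology X U) (subtopology X (\<sigma> ` U)) \<sigma>"
    using assms unfolding local_homeo_on_def by auto
  show ?thesis
    unfolding lh_def
  proof (intro conjI ballI allI impI)
    show "D \<subseteq> topspace X" using D openin_subset by blast
  next
    fix x U assume x: "x \<in> D" and U: "openin X U \<and> x \<in> U"
    obtain U0 where U0: "openin X U0" "x \<in> U0" "U0 \<subseteq> D" "openin X (\<sigma> ` U0)"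
      "homeomorphic_map (subtopology X U0) (subtopology X (\<sigma> ` U0)) \<sigma>"
      using loc[OF x] by blast
    have U0t: "U0 \<subseteq> topspace X" using U0(1) openin_subset by blast
    have inj: "inj_on \<sigma> U0"
      using homeomorphic_imp_injective_map[OF U0(5)] U0t by (simp add: inf.absorb2)
    have om: "open_map (subtopology X U0) (subtopology X (\<sigma> ` U0)) \<sigma>"
      using homeomorphic_imp_open_map[OF U0(5)] .
    show "\<exists>N. openin X N \<and> x \<in> N \<and> N \<subseteq> U \<inter> D \<and> inj_on \<sigma> N \<and>
        (\<forall>W. openin X W \<and> W \<subseteq> N \<longrightarrow> openin X (\<sigma> ` W))"
    proof (intro exI[of _ "U \<inter> U0"] conjI allI impI)
      show "openin X (U \<inter> U0)" using U U0 by blast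
      show "x \<in> U \<inter> U0" using U U0 by blast
      show "U \<inter> U0 \<subseteq> U \<inter> D" using U0 by blast
      show "inj_on \<sigma> (U \<inter> U0)" using inj inj_on_subset by blast
      fix W assume W: "openin X W \<and> W \<subseteq> U \<inter> U0"
      have "openin (subtopology X U0) W"
        unfolding openin_subtopology using W by (intro exI[of _ W]) auto
      then have "openin (subtopology X (\<sigma> ` U0)) (\<sigma> ` W)"
        using om unfolding open_map_def by blast
      then show "openin X (\<sigma> ` W)" using openin_trans_full U0(4) by blast
    qed
  next
    fix x V assume x: "x \<in> D" and V: "openin X V \<and> \<sigma> x \<in> V"
    obtain U0 where U0: "openin X U0" "x \<in> U0" "U0 \<subseteq> D" "openin X (\<sigma> ` U0)"
      "homeomorphic_map (subtopology X U0) (subtopology X (\<sigma> ` U0)) \<sigma>"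
      using loc[OF x] by blast
    have U0t: "U0 \<subseteq> topspace X" using U0(1) openin_subset by blast
    have "openin (subtopology X (\<sigma> ` U0)) (V \<inter> \<sigma> ` U0)"
      unfolding openin_subtopology using V by blast
    then have "openin (subtopology X U0) {z \<in> topspace (subtopology X U0). \<sigma> z \<in> V \<inter> \<sigma> ` U0}"
      using openin_continuous_map_preimage[OF homeomorphic_imp_continuous_map[OF U0(5)]] by blast
    then have op: "openin X {z \<in> topspace (subtopology X U0). \<sigma> z \<in> V \<inter> \<sigma> ` U0}"
      using openin_trans_full U0(1) by blast
    show "\<exists>N. openin X N \<and> x \<in> N \<and> N \<subseteq> D \<and> \<sigma> ` N \<subseteq> V"
      apply (rule exI[of _ "{z \<in> topspace (subtopology X U0). \<sigma> z \<in> V \<inter> \<sigma> ` U0}"])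
      using op U0 U0t V by auto
  qed
qed


lemma iso_transfer:
  assumes f: "lh X f A" and x: "x \<in> A" "x \<in> Orb" and cl: "\<forall>w\<in>A. w \<in> Orb \<longleftrightarrow> f w \<in> Orb"
  shows "openin (subtopology X Orb) {x} \<longleftrightarrow> openin (subtopology X Orb) {f x}"
proof
  assume "openin (subtopology X Orb) {x}"
  then obtain T where T: "openin X T" "{x} = T \<inter> Orb" unfolding openin_subtopology by auto
  have xT: "x \<in> T" using T(2) by (metis IntD1 insertI1)
  obtain N where N: "openin X N" "x \<in> N" "N \<subseteq> T \<inter> A" "inj_on f N"
     "\<And>W. openin X W \<Longrightarrow> W \<subseteq> N \<Longrightarrow> openin X (f ` W)"
    using lhD1[OF f x(1) T(1) xT] by metis
  have "{f x} = f ` N \<inter> Orb"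
  proof
    show "{f x} \<subseteq> f ` N \<inter> Orb" using N(2) cl x by auto
    show "f ` N \<inter> Orb \<subseteq> {f x}"
    proof
      fix z assume "z \<in> f ` N \<inter> Orb"
      then obtain w where w: "w \<in> N" "z = f w" "f w \<in> Orb" by auto
      have wA: "w \<in> A" "w \<in> T" using w(1) N(3) by auto
      then have "w \<in> Orb" using cl w(3) by auto
      then have "w \<in> T \<inter> Orb" using wA by auto
      then have "w = x" using T(2) by auto
      then show "z \<in> {f x}" using w by simp
    qed
  qed
  then show "openin (subtopology X Orb) {f x}"
    unfolding openin_subtopology using N(5)[OF N(1) order_refl] by auto
next
  assume "openin (subtopology X Orb) {f x}"
  then obtain T where T: "openin X T" "{f x} = T \<inter> Orb" unfolding openin_subtopology by auto
  have xT: "f x \<in> T" using T(2) by (metis IntD1 insertI1)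
  obtain N1 where N1: "openin X N1" "x \<in> N1" "N1 \<subseteq> A" "f ` N1 \<subseteq> T"
    using lhD2[OF f x(1) T(1) xT] by metis
  obtain N where N: "openin X N" "x \<in> N" "N \<subseteq> N1 \<inter> A" "inj_on f N"
    using lhD1[OF f x(1) N1(1) N1(2)] by metis
  have "{x} = N \<inter> Orb"
  proof
    show "{x} \<subseteq> N \<inter> Orb" using N x by auto
    show "N \<inter> Orb \<subseteq> {x}"
    proof
      fix z assume z: "z \<in> N \<inter> Orb"
      have zA: "z \<in> A" "z \<in> N1" using z N(3) by auto
      have "f z \<in> Orb" using cl zA z by auto
      moreover have "f z \<in> T" using N1(4) zA by auto
      ultimately have "f z \<in> T \<inter> Orb" by auto
      then have "f z = f x" using T(2) by auto
      then have "z = x" using N(4) N(2) z inj_onD by fastforce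
      then show "z \<in> {x}" by simp
    qed
  qed
  then show "openin (subtopology X Orb) {x}"
    unfolding openin_subtopology using N(1) by auto
qed

lemma fp_add: "(f ^^ (m + n)) x = (f ^^ n) ((f ^^ m) x)"
  by (metis comp_apply funpow_add add.commute)

locale drl =
  fixes X :: "'a topology" and D :: "'a set" and \<sigma> :: "'a \<Rightarrow> 'a"
  assumes Dsub: "D \<subseteq> topspace X" and imsub: "\<sigma> ` D \<subseteq> topspace X"
begin

abbreviation "dp \<equiv> dom_pow X D \<sigma>"

definition rel where
  "rel x y \<longleftrightarrow> (\<exists>m n. x \<in> dp m \<and> y \<in> dp n \<and> (\<sigma>^^m) x = (\<sigma>^^n) y)"

lemma dp_sub: "dp n \<subseteq> topspace X" by (auto simp: dom_pow_def)
lemma dp_0: "dp 0 = topspace X" by (auto simp: dom_pow_def)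
lemma dp_Suc: "dp (Suc n) = {x \<in> dp n. (\<sigma>^^n) x \<in> D}"
  by (auto simp: dom_pow_def less_Suc_eq)
lemma dp_mono: "m \<le> n \<Longrightarrow> dp n \<subseteq> dp m" by (auto simp: dom_pow_def)
lemma dp_max: "y \<in> dp b \<Longrightarrow> y \<in> dp c \<Longrightarrow> y \<in> dp (max b c)"
  by (auto simp: dom_pow_def max_def)

lemma pow_top: "x \<in> dp m \<Longrightarrow> (\<sigma>^^m) x \<in> topspace X"
proof (induction m)
  case 0 then show ?case by (simp add: dp_0)
next
  case (Suc m)
  then have "(\<sigma>^^m) x \<in> D" by (simp add: dp_Suc)
  then show ?case using imsub by auto
qed

lemma dp_add: "x \<in> dp (m + n) \<longleftrightarrow> x \<in> dp m \<and> (\<sigma>^^m) x \<in> dp n"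
proof (induction n)
  case 0 then show ?case using pow_top by (auto simp: dp_0)
next
  case (Suc n)
  show ?case using Suc by (simp add: dp_Suc fp_add)
qed

lemma L2: "x \<in> dp a \<Longrightarrow> y \<in> dp (b + i) \<Longrightarrow> (\<sigma>^^a) x = (\<sigma>^^b) y \<Longrightarrow>
   x \<in> dp (a + i) \<and> (\<sigma>^^(a + i)) x = (\<sigma>^^(b + i)) y"
  by (simp add: dp_add fp_add)

lemma rel_sym: "rel x y \<Longrightarrow> rel y x" unfolding rel_def by metis
lemma rel_refl: "x \<in> topspace X \<Longrightarrow> rel x x" unfolding rel_def
  by (rule exI[of _ 0], rule exI[of _ 0]) (simp add: dp_0)
lemma rel_top: "rel x y \<Longrightarrow> x \<in> topspace X \<and> y \<in> topspace X"
  unfolding rel_def using dp_sub by blast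

lemma rel_trans:
  assumes "rel x y" "rel y z" shows "rel x z"
proof -
  obtain a b where ab: "x \<in> dp a" "y \<in> dp b" "(\<sigma>^^a) x = (\<sigma>^^b) y"
    using assms(1) unfolding rel_def by blast
  obtain c d where cd: "y \<in> dp c" "z \<in> dp d" "(\<sigma>^^c) y = (\<sigma>^^d) z"
    using assms(2) unfolding rel_def by blast
  define k where "k = max b c"
  have yk: "y \<in> dp k" using dp_max ab cd k_def by blast
  have k1: "k = b + (k - b)" and k2: "k = c + (k - c)" by (auto simp: k_def)
  have 1: "x \<in> dp (a + (k - b)) \<and> (\<sigma>^^(a + (k - b))) x = (\<sigma>^^k) y"
    using L2[OF ab(1) _ ab(3), of "k - b"] yk k1 by metis
  have 2: "z \<in> dp (d + (k - c)) \<and> (\<sigma>^^(d + (k - c))) z = (\<sigma>^^k) y"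
    using L2[OF cd(2) _ cd(3)[symmetric], of "k - c"] yk k2 by metis
  show ?thesis unfolding rel_def using 1 2 by metis
qed

lemma rel_pow: "x \<in> dp n \<Longrightarrow> rel x ((\<sigma>^^n) x)"
  unfolding rel_def using pow_top
  by (intro exI[of _ n] exI[of _ 0]) (auto simp: dp_0)

lemma orbit_eq: "DR_orbit X D \<sigma> x = {y. rel y x}"
  by (simp add: DR_orbit_def rel_def)

lemma G_mem: "(x, k, y) \<in> DR_groupoid X D \<sigma> \<longleftrightarrow>
   (\<exists>m n. k = int m - int n \<and> x \<in> dp m \<and> y \<in> dp n \<and> (\<sigma>^^m) x = (\<sigma>^^n) y)"
  by (auto simp: DR_groupoid_def)

lemma G_rel: "(x, k, y) \<in> DR_groupoid X D \<sigma> \<Longrightarrow> rel x y"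
  unfolding G_mem rel_def by blast

lemma periodic_full:
  assumes "periodic_pt X D \<sigma> x" shows "x \<in> dp N"
proof -
  obtain l p where lp: "p \<ge> 1" "x \<in> dp (l + p)" "(\<sigma>^^(l + p)) x = (\<sigma>^^l) x"
    using assms unfolding periodic_pt_def by blast
  have "x \<in> dp (l + j)" for j
  proof (induction j rule: less_induct)
    case (less j)
    show ?case
    proof (cases "j \<le> p")
      case True then show ?thesis using dp_mono[of "l + j" "l + p"] lp by auto
    next
      case False
      have "j - p < j" using False lp by auto
      then have "x \<in> dp (l + (j - p))" using less by blast
      then have "(\<sigma>^^l) x \<in> dp (j - p)" by (simp add: dp_add)
      then have "x \<in> dp ((l + p) + (j - p))" using lp by (simp add: dp_add del: add_diff_assoc)
      moreover have "(l + p) + (j - p) = l + j" using False by simp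
      ultimately show ?thesis by simp
    qed
  qed
  then show ?thesis using dp_mono[of N "l + N"] by auto
qed

lemma periodic_shift:
  assumes "p \<ge> 1" "x \<in> dp (l + p)" "(\<sigma>^^(l + p)) x = (\<sigma>^^l) x" "l \<le> N"
  shows "(\<sigma>^^(N + p)) x = (\<sigma>^^N) x"
proof -
  have "(\<sigma>^^(N + p)) x = (\<sigma>^^((l + p) + (N - l))) x" using assms(4) by (simp add: algebra_simps)
  also have "\<dots> = (\<sigma>^^(N - l)) ((\<sigma>^^(l + p)) x)" by (rule fp_add)
  also have "\<dots> = (\<sigma>^^(N - l)) ((\<sigma>^^l) x)" by (simp only: assms(3))
  also have "\<dots> = (\<sigma>^^N) x" using assms(4) by (metis fp_add le_add_diff_inverse)
  finally show ?thesis .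
qed

lemma periodic_rel:
  assumes "periodic_pt X D \<sigma> x" "rel x y" shows "periodic_pt X D \<sigma> y"
proof -
  obtain l p where lp: "p \<ge> 1" "x \<in> dp (l + p)" "(\<sigma>^^(l + p)) x = (\<sigma>^^l) x"
    using assms unfolding periodic_pt_def by blast
  obtain a b where ab: "x \<in> dp a" "y \<in> dp b" "(\<sigma>^^a) x = (\<sigma>^^b) y"
    using assms(2) unfolding rel_def by blast
  have xf: "\<And>N. x \<in> dp N" using periodic_full assms(1) by blast
  have 1: "y \<in> dp (b + (l + p)) \<and> (\<sigma>^^(b + (l + p))) y = (\<sigma>^^(a + (l + p))) x"
    using L2[OF ab(2) xf ab(3)[symmetric]] by blast
  have 2: "(\<sigma>^^(b + l)) y = (\<sigma>^^(a + l)) x"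
    using L2[OF ab(2) xf ab(3)[symmetric]] by blast
  have 3: "(\<sigma>^^((a + l) + p)) x = (\<sigma>^^(a + l)) x"
    using periodic_shift[OF lp] by simp
  show ?thesis unfolding periodic_pt_def
    apply (rule exI[of _ "b + l"], rule exI[of _ p])
    using 1 2 3 lp(1) by (simp add: add.assoc)
qed


lemma lh_pow: "lh X \<sigma> D \<Longrightarrow> lh X (\<sigma>^^n) (dp n)"
proof (induction n)
  case 0 then show ?case using lh_id[of X] by (simp add: dp_0 id_def)
next
  case (Suc n)
  have "lh X (\<sigma> \<circ> \<sigma>^^n) {x \<in> dp n. (\<sigma>^^n) x \<in> D}"
    by (rule lh_comp[OF Suc.IH[OF Suc.prems] Suc.prems])
  then show ?case by (simp add: dp_Suc comp_def)
qed

lemma orbit_rel_eq: "rel x y \<Longrightarrow> DR_orbit X D \<sigma> x = DR_orbit X D \<sigma> y"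
proof -
  assume r: "rel x y"
  have "rel z x \<longleftrightarrow> rel z y" for z
    using rel_trans[of z x y] rel_trans[of z y x] r rel_sym[OF r] by blast
  then show ?thesis unfolding orbit_eq by blast
qed

lemma P0_rel:
  assumes lhs: "lh X \<sigma> D" and r: "rel x y"
  shows "x \<in> P0_set X D \<sigma> \<longleftrightarrow> y \<in> P0_set X D \<sigma>"
proof -
  define Orb where "Orb = DR_orbit X D \<sigma> y"
  have Ox: "DR_orbit X D \<sigma> x = Orb" using orbit_rel_eq[OF r] Orb_def by simp
  obtain m n where mn: "x \<in> dp m" "y \<in> dp n" "(\<sigma>^^m) x = (\<sigma>^^n) y"
    using r unfolding rel_def by blast
  have closed: "\<forall>w\<in>dp k. w \<in> Orb \<longleftrightarrow> (\<sigma>^^k) w \<in> Orb" for k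
  proof
    fix w assume w: "w \<in> dp k"
    have "rel w ((\<sigma>^^k) w)" "rel ((\<sigma>^^k) w) w" using rel_pow[OF w] rel_sym by auto
    then have "rel w y \<longleftrightarrow> rel ((\<sigma>^^k) w) y"
      using rel_trans[of w "(\<sigma>^^k) w" y] rel_trans[of "(\<sigma>^^k) w" w y] by blast
    then show "w \<in> Orb \<longleftrightarrow> (\<sigma>^^k) w \<in> Orb" unfolding Orb_def orbit_eq by simp
  qed
  have yO: "y \<in> Orb" unfolding Orb_def orbit_eq using rel_refl rel_top r by blast
  have xO: "x \<in> Orb" unfolding Orb_def orbit_eq using r by blast
  have "openin (subtopology X Orb) {x} \<longleftrightarrow> openin (subtopology X Orb) {(\<sigma>^^m) x}"
    by (rule iso_transfer[OF lh_pow[OF lhs] mn(1) xO closed])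
  also have "\<dots> \<longleftrightarrow> openin (subtopology X Orb) {y}"
    unfolding mn(3) by (rule iso_transfer[OF lh_pow[OF lhs] mn(2) yO closed, symmetric])
  finally have iso: "openin (subtopology X Orb) {x} \<longleftrightarrow> openin (subtopology X Orb) {y}" .
  have per: "periodic_pt X D \<sigma> x \<longleftrightarrow> periodic_pt X D \<sigma> y"
    using periodic_rel r rel_sym by blast
  show ?thesis unfolding P0_set_def using Ox Orb_def iso per rel_top[OF r] by auto
qed


lemma orbit_self: "x \<in> topspace X \<Longrightarrow> x \<in> DR_orbit X D \<sigma> x"
  unfolding orbit_eq using rel_refl by auto

lemma orbit_sub: "DR_orbit X D \<sigma> x \<subseteq> topspace X"
  unfolding orbit_eq using rel_top by auto

lemma Z_open:
  assumes "openin X U" "openin X V"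
  shows "DR_open X D \<sigma> (DR_Z X D \<sigma> U m n V)"
  unfolding DR_open_def
proof (intro conjI ballI)
  show "DR_Z X D \<sigma> U m n V \<subseteq> DR_groupoid X D \<sigma>"
    unfolding DR_Z_def DR_groupoid_def by blast
  fix g assume "g \<in> DR_Z X D \<sigma> U m n V"
  then show "\<exists>U' m' n' V'. openin X U' \<and> openin X V' \<and> g \<in> DR_Z X D \<sigma> U' m' n' V' \<and>
      DR_Z X D \<sigma> U' m' n' V' \<subseteq> DR_Z X D \<sigma> U m n V"
    using assms by blast
qed

lemma pow_in_F:
  assumes lp: "p \<ge> 1" "x \<in> dp (l + p)" "(\<sigma>^^(l + p)) x = (\<sigma>^^l) x"
  shows "(\<sigma>^^N) x \<in> (\<lambda>j. (\<sigma>^^j) x) ` {..<l + p}"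
proof (induction N rule: less_induct)
  case (less N)
  show ?case
  proof (cases "N < l + p")
    case True then show ?thesis by auto
  next
    case False
    then have "(\<sigma>^^((N - p) + p)) x = (\<sigma>^^(N - p)) x"
      by (intro periodic_shift[OF lp]) auto
    moreover have "(N - p) + p = N" using False by auto
    moreover have "N - p < N" using False lp(1) by auto
    ultimately show ?thesis using less by metis
  qed
qed

lemma cyc_pow:
  assumes "w \<in> dp p" "(\<sigma>^^p) w = w"
  shows "w \<in> dp (j * p) \<and> (\<sigma>^^(j * p)) w = w"
proof (induction j)
  case 0 then show ?case using assms dp_sub dp_0 by auto
next
  case (Suc j)
  have e: "Suc j * p = p + j * p" by simp
  show ?case unfolding e using Suc assms by (simp add: dp_add fp_add)
qed

lemma periodic_in_F:
  assumes lp: "p \<ge> 1" "x \<in> dp (l + p)" "(\<sigma>^^(l + p)) x = (\<sigma>^^l) x"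
    and w: "rel w x" "w \<in> dp p" "(\<sigma>^^p) w = w"
  shows "w \<in> (\<lambda>j. (\<sigma>^^j) x) ` {..<l + p}"
proof -
  obtain a b where ab: "w \<in> dp a" "x \<in> dp b" "(\<sigma>^^a) w = (\<sigma>^^b) x"
    using w(1) unfolding rel_def by blast
  have c: "(\<sigma>^^(a * p)) w = w" using cyc_pow[OF w(2,3)] by blast
  have ap: "a + (a * p - a) = a * p" using lp(1)
    by (metis le_add_diff_inverse mult.commute mult_le_mono1 nat_mult_1)
  have "w = (\<sigma>^^(a + (a * p - a))) w" using c ap by simp
  also have "\<dots> = (\<sigma>^^(a * p - a)) ((\<sigma>^^b) x)" by (simp only: fp_add ab(3))
  also have "\<dots> = (\<sigma>^^(b + (a * p - a))) x" by (simp only: fp_add)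
  finally show ?thesis using pow_in_F[OF lp] by simp
qed


lemma hard:
  assumes Hs: "Hausdorff_space X" and lhs: "lh X \<sigma> D" and xt: "x \<in> topspace X"
    and eq: "DR_iso_interior_at X D \<sigma> x = DR_isotropy_at X D \<sigma> x"
    and per: "periodic_pt X D \<sigma> x"
  shows "openin (subtopology X (DR_orbit X D \<sigma> x)) {x}"
proof -
  obtain l p where lp: "p \<ge> 1" "x \<in> dp (l + p)" "(\<sigma>^^(l + p)) x = (\<sigma>^^l) x"
    using per unfolding periodic_pt_def by blast
  define Orb where "Orb = DR_orbit X D \<sigma> x"
  define Y where "Y = X closure_of Orb"
  define H where "H = DR_reduction X D \<sigma> Y"
  have xl: "x \<in> dp l" using lp(2) dp_mono[of l "l + p"] by auto
  have "(x, int (l + p) - int l, x) \<in> DR_groupoid X D \<sigma>"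
    unfolding G_mem using lp xl by blast
  then have "(x, int p, x) \<in> DR_isotropy_at X D \<sigma> x"
    unfolding DR_isotropy_at_def DR_r_def DR_s_def by simp
  then have "(x, int p, x) \<in> DR_iso_interior_at X D \<sigma> x" using eq by simp
  then obtain W where W: "DR_open X D \<sigma> W" "(x, int p, x) \<in> W" "W \<inter> H \<subseteq> iso_bundle H"
    unfolding DR_iso_interior_at_def Let_def H_def Y_def Orb_def by blast
  then obtain U m' n' V where UV: "openin X U" "openin X V" "(x, int p, x) \<in> DR_Z X D \<sigma> U m' n' V"
      "DR_Z X D \<sigma> U m' n' V \<subseteq> W"
    unfolding DR_open_def by blast
  from UV(3) have xm: "x \<in> U" "x \<in> dp m'" "x \<in> V" "x \<in> dp n'" "(\<sigma>^^m') x = (\<sigma>^^n') x"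
      "int p = int m' - int n'"
    unfolding DR_Z_def by auto
  then have mp: "m' = n' + p" by linarith
  have WG: "W \<subseteq> DR_groupoid X D \<sigma>" using W(1) unfolding DR_open_def by blast
  define x0 where "x0 = (\<sigma>^^n') x"
  define F where "F = (\<lambda>j. (\<sigma>^^j) x) ` {..<l + p}"
  have Ffin: "finite F" unfolding F_def by simp
  have Ft: "F \<subseteq> topspace X"
  proof
    fix w assume "w \<in> F"
    then obtain j where j: "j < l + p" "w = (\<sigma>^^j) x" unfolding F_def by blast
    have "x \<in> dp j" using lp(2) dp_mono[of j "l + p"] j by auto
    then show "w \<in> topspace X" using pow_top j by simp
  qed
  have t1: "t1_space X" using Hs Hausdorff_imp_t1_space by blast
  have "closedin X (F - {x0})"
    using t1 Ffin Ft unfolding t1_space_closedin_finite by auto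
  then have V0o: "openin X (topspace X - (F - {x0}))" by (simp add: openin_diff)
  have x0t: "x0 \<in> topspace X" unfolding x0_def using pow_top xm(4) by blast
  have lhn: "lh X (\<sigma>^^n') (dp n')" and lhm: "lh X (\<sigma>^^m') (dp m')" using lh_pow lhs by auto
  obtain Na where Na: "openin X Na" "x \<in> Na" "Na \<subseteq> V \<inter> dp n'" "inj_on (\<sigma>^^n') Na"
    using lhD1[OF lhn xm(4) UV(2) xm(3)] by metis
  obtain Nb where Nb: "openin X Nb" "x \<in> Nb" "Nb \<subseteq> U \<inter> dp m'"
     "\<And>W. openin X W \<Longrightarrow> W \<subseteq> Nb \<Longrightarrow> openin X ((\<sigma>^^m') ` W)"
    using lhD1[OF lhm xm(2) UV(1) xm(1)] by metis
  define V1 where "V1 = (topspace X - (F - {x0})) \<inter> (\<sigma>^^m') ` Nb"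
  have V1o: "openin X V1" unfolding V1_def using V0o Nb(4)[OF Nb(1) order_refl] by blast
  have "x0 \<in> (\<sigma>^^m') ` Nb" using Nb(2) xm(5) x0_def by (metis image_eqI)
  then have x0V1: "x0 \<in> V1" unfolding V1_def using x0t by auto
  obtain Nc where Nc: "openin X Nc" "x \<in> Nc" "Nc \<subseteq> dp n'" "(\<sigma>^^n') ` Nc \<subseteq> V1"
    using lhD2[OF lhn xm(4) V1o] x0V1 x0_def by metis
  have xO: "x \<in> Orb" unfolding Orb_def using orbit_self xt by blast
  have "{x} = (Na \<inter> Nc) \<inter> Orb"
  proof
    show "{x} \<subseteq> (Na \<inter> Nc) \<inter> Orb" using Na Nc xO by auto
    show "(Na \<inter> Nc) \<inter> Orb \<subseteq> {x}"
    proof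
      fix z assume z: "z \<in> (Na \<inter> Nc) \<inter> Orb"
      have zV1: "(\<sigma>^^n') z \<in> V1" using z Nc(4) by auto
      then obtain y where y: "y \<in> Nb" "(\<sigma>^^m') y = (\<sigma>^^n') z" unfolding V1_def by auto
      have zn: "z \<in> V" "z \<in> dp n'" using z Na(3) by auto
      have ym: "y \<in> U" "y \<in> dp m'" using y Nb(3) by auto
      have hZ: "(y, int m' - int n', z) \<in> DR_Z X D \<sigma> U m' n' V"
        unfolding DR_Z_def using zn ym y(2) by blast
      then have hW: "(y, int m' - int n', z) \<in> W" using UV(4) by blast
      have zO: "z \<in> Orb" using z by blast
      have zY: "z \<in> Y" unfolding Y_def using closure_of_subset[OF orbit_sub] zO Orb_def by blast
      have "(y, int m' - int n', z) \<in> H"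
        unfolding H_def DR_reduction_def DR_s_def using hW WG zY by auto
      then have "(y, int m' - int n', z) \<in> iso_bundle H" using W(3) hW by blast
      then have yz: "y = z" unfolding iso_bundle_def DR_s_def DR_r_def by simp
      define w where "w = (\<sigma>^^n') z"
      have zm: "z \<in> dp (n' + p)" using ym yz mp by simp
      then have wp: "w \<in> dp p" unfolding w_def by (simp add: dp_add)
      have "(\<sigma>^^p) w = (\<sigma>^^(n' + p)) z" unfolding w_def by (simp add: fp_add)
      then have wper: "(\<sigma>^^p) w = w" using y(2) yz mp w_def by simp
      have "rel z x" using zO unfolding Orb_def orbit_eq by simp
      moreover have "rel w z" unfolding w_def using rel_pow[OF zn(2)] rel_sym by blast
      ultimately have "rel w x" using rel_trans by blast
      then have "w \<in> F" unfolding F_def using periodic_in_F[OF lp _ wp wper] by blast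
      moreover have "w \<in> V1" using zV1 w_def by simp
      ultimately have "w = x0" unfolding V1_def by blast
      then have "(\<sigma>^^n') z = (\<sigma>^^n') x" unfolding w_def x0_def .
      then have "z = x" using Na(4) Na(2) z inj_onD by fastforce
      then show "z \<in> {x}" by simp
    qed
  qed
  then show ?thesis unfolding openin_subtopology Orb_def[symmetric]
    using Na(1) Nc(1) by blast
qed


lemma easy:
  assumes Hs: "Hausdorff_space X" and x: "x \<in> aperiodic_set X D \<sigma> \<union> P0_set X D \<sigma>"
  shows "DR_isotropy_at X D \<sigma> x \<subseteq> DR_iso_interior_at X D \<sigma> x"
proof
  fix g assume g: "g \<in> DR_isotropy_at X D \<sigma> x"
  define Orb where "Orb = DR_orbit X D \<sigma> x"
  define Y where "Y = X closure_of Orb"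
  define H where "H = DR_reduction X D \<sigma> Y"
  have xt: "x \<in> topspace X" using x unfolding aperiodic_set_def P0_set_def by auto
  obtain k where gk: "g = (x, k, x)" "g \<in> DR_groupoid X D \<sigma>"
    using g unfolding DR_isotropy_at_def DR_r_def DR_s_def by (cases g) auto
  then obtain m n where mn: "k = int m - int n" "x \<in> dp m" "x \<in> dp n" "(\<sigma>^^m) x = (\<sigma>^^n) x"
    using G_mem by blast
  have xO: "x \<in> Orb" unfolding Orb_def using orbit_self xt by blast
  have xY: "x \<in> Y" unfolding Y_def using closure_of_subset[OF orbit_sub] xO Orb_def by blast
  have gH: "g \<in> H" unfolding H_def DR_reduction_def DR_s_def using gk xY by simp
  have "\<exists>W. DR_open X D \<sigma> W \<and> g \<in> W \<and> W \<inter> H \<subseteq> iso_bundle H"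
  proof (cases "x \<in> aperiodic_set X D \<sigma>")
    case True
    have "m = n"
    proof (rule ccontr)
      assume ne: "m \<noteq> n"
      have "periodic_pt X D \<sigma> x"
      proof (cases "m < n")
        case True
        then show ?thesis unfolding periodic_pt_def using mn
          by (intro exI[of _ m] exI[of _ "n - m"]) auto
      next
        case False
        then show ?thesis unfolding periodic_pt_def using mn ne
          by (intro exI[of _ n] exI[of _ "m - n"]) auto
      qed
      then show False using True unfolding aperiodic_set_def by blast
    qed
    define W where "W = DR_Z X D \<sigma> (topspace X) 0 0 (topspace X)"
    show ?thesis
    proof (intro exI conjI)
      show "DR_open X D \<sigma> W" unfolding W_def by (rule Z_open) auto
      show "g \<in> W" unfolding W_def DR_Z_def using gk mn \<open>m = n\<close> xt dp_0 by auto
      show "W \<inter> H \<subseteq> iso_bundle H"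
        unfolding W_def DR_Z_def iso_bundle_def DR_r_def DR_s_def by auto
    qed
  next
    case False
    then have P0: "x \<in> P0_set X D \<sigma>" using x by blast
    then obtain U where U: "openin X U" "{x} = U \<inter> Orb"
      unfolding P0_set_def openin_subtopology Orb_def by blast
    have xU: "x \<in> U" using U(2) by (metis IntD1 insertI1)
    define W where "W = DR_Z X D \<sigma> U m n U"
    show ?thesis
    proof (intro exI conjI)
      show "DR_open X D \<sigma> W" unfolding W_def by (rule Z_open) (use U in auto)
      show "g \<in> W" unfolding W_def DR_Z_def using gk mn xU by auto
      show "W \<inter> H \<subseteq> iso_bundle H"
      proof
        fix h assume h: "h \<in> W \<inter> H"
        then obtain y z where yz: "h = (y, int m - int n, z)" "y \<in> U" "y \<in> dp m" "z \<in> U" "z \<in> dp n"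
          "(\<sigma>^^m) y = (\<sigma>^^n) z"
          unfolding W_def DR_Z_def by blast
        have "z \<in> Y" using h yz(1) unfolding H_def DR_reduction_def DR_s_def by auto
        then have "z \<in> U \<inter> X closure_of Orb" using yz Y_def by blast
        then have "z \<in> X closure_of (U \<inter> Orb)" using openin_Int_closure_of_subset[OF U(1)] by blast
        moreover have "closedin X {x}"
          using Hausdorff_imp_t1_space[OF Hs] xt unfolding t1_space_closedin_singleton by blast
        ultimately have zx: "z = x" using U(2) closure_of_eq by (metis singletonD)
        have "rel y x" unfolding rel_def using yz zx by blast
        then have "y \<in> U \<inter> Orb" using yz(2) unfolding Orb_def orbit_eq by blast
        then have "y = x" using U(2) by blast
        then show "h \<in> iso_bundle H" unfolding iso_bundle_def DR_r_def DR_s_def using h yz zx by auto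
      qed
    qed
  qed
  then show "g \<in> DR_iso_interior_at X D \<sigma> x"
    unfolding DR_iso_interior_at_def Let_def H_def[symmetric] Y_def[symmetric] Orb_def[symmetric]
    using gH g by blast
qed

end

theorem lemma4p2:
  fixes X :: "'a topology" and D :: "'a set" and \<sigma> :: "'a \<Rightarrow> 'a"
  assumes "Hausdorff_space X" and "locally_compact_space X"
    and "local_homeo_on X D \<sigma>"
  shows "DR_invariant X D \<sigma> (aperiodic_set X D \<sigma>) \<and>
         DR_invariant X D \<sigma> (P0_set X D \<sigma>) \<and>
         aperiodic_set X D \<sigma> \<union> P0_set X D \<sigma> =
         {x \<in> topspace X. DR_iso_interior_at X D \<sigma> x = DR_isotropy_at X D \<sigma> x}"
proof -
  have lhs: "lh X \<sigma> D" using lh_sigma[OF assms(3)] .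
  interpret drl X D \<sigma>
    using assms(3) unfolding local_homeo_on_def by unfold_locales (auto dest: openin_subset)
  have Grel: "\<And>g. g \<in> DR_groupoid X D \<sigma> \<Longrightarrow> rel (DR_r g) (DR_s g)"
    unfolding DR_r_def DR_s_def using G_rel by force
  have inv1: "DR_invariant X D \<sigma> (aperiodic_set X D \<sigma>)"
    unfolding DR_invariant_def
  proof (intro conjI ballI)
    show "aperiodic_set X D \<sigma> \<subseteq> topspace X" unfolding aperiodic_set_def by blast
    fix g assume "g \<in> DR_groupoid X D \<sigma>"
    then have r: "rel (DR_r g) (DR_s g)" by (rule Grel)
    show "DR_r g \<in> aperiodic_set X D \<sigma> \<longleftrightarrow> DR_s g \<in> aperiodic_set X D \<sigma>"
      unfolding aperiodic_set_def using periodic_rel[OF _ r] periodic_rel[OF _ rel_sym[OF r]] rel_top[OF r]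
      by blast
  qed
  have inv2: "DR_invariant X D \<sigma> (P0_set X D \<sigma>)"
    unfolding DR_invariant_def
  proof (intro conjI ballI)
    show "P0_set X D \<sigma> \<subseteq> topspace X" unfolding P0_set_def by blast
    fix g assume "g \<in> DR_groupoid X D \<sigma>"
    then have r: "rel (DR_r g) (DR_s g)" by (rule Grel)
    show "DR_r g \<in> P0_set X D \<sigma> \<longleftrightarrow> DR_s g \<in> P0_set X D \<sigma>" by (rule P0_rel[OF lhs r])
  qed
  have sub: "DR_iso_interior_at X D \<sigma> x \<subseteq> DR_isotropy_at X D \<sigma> x" for x
    unfolding DR_iso_interior_at_def Let_def by blast
  have eq: "aperiodic_set X D \<sigma> \<union> P0_set X D \<sigma> =
         {x \<in> topspace X. DR_iso_interior_at X D \<sigma> x = DR_isotropy_at X D \<sigma> x}"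
  proof (intro equalityI subsetI)
    fix x assume x: "x \<in> aperiodic_set X D \<sigma> \<union> P0_set X D \<sigma>"
    have "x \<in> topspace X" using x unfolding aperiodic_set_def P0_set_def by auto
    then show "x \<in> {x \<in> topspace X. DR_iso_interior_at X D \<sigma> x = DR_isotropy_at X D \<sigma> x}"
      using easy[OF assms(1) x] sub[of x] by auto
  next
    fix x assume x: "x \<in> {x \<in> topspace X. DR_iso_interior_at X D \<sigma> x = DR_isotropy_at X D \<sigma> x}"
    show "x \<in> aperiodic_set X D \<sigma> \<union> P0_set X D \<sigma>"
    proof (cases "periodic_pt X D \<sigma> x")
      case True
      then have "openin (subtopology X (DR_orbit X D \<sigma> x)) {x}"
        using hard[OF assms(1) lhs] x by blast
      then show ?thesis unfolding P0_set_def using x True by blast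
    next
      case False
      then show ?thesis unfolding aperiodic_set_def using x by blast
    qed
  qed
  show ?thesis using inv1 inv2 eq by blast
qed

end
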